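(* Every solution of $x_{n+1}=\sum_{j=0}^{k-1}a_jx_{n-j}$ converges to $0$ (equivalently, all eigenvalues of $J_0$ lie in the open unit disk) if and only if there exists $m\in\mathbb{N}=\{0,1,2,\dots\}$ with $\|p_m\|_{\ell_1}<2$, i.e. $\sum_{j=0}^{k-1}|b_{m,j}|<1$.
   Context: Let $k\ge 2$, $a_0,\dots,a_{k-1}\in\mathbb{R}$, $a_0\ne0$. $J_0$ is the $k\times k$ companion matrix with first row $(a_0,\dots,a_{k-1})$, ones at positions $(i+1,i)$, zeros elsewhere. Define $b_{0,j}=a_j$ ($0\le j\le k-1$) and for $m\ge0$: $b_{m+1,j}=a_jb_{m,0}+b_{m,j+1}$ ($0\le j\le k-2$), $b_{m+1,k-1}=a_{k-1}b_{m,0}$ (equivalently, $[b_{m,0},\dots,b_{m,k-1}]^t=(J_0^t)^m[a_0,\dots,a_{k-1}]^t$). Let $p_m(x)=x^{k+m}-\sum_{j=0}^{k-1}b_{m,j}x^{k-j-1}$. For a polynomial $p$, $\|p\|_{\ell_1}$ is the sum of the absolute values of its coefficients. *)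

theory Defs
  imports "HOL-Analysis.Analysis" "HOL-Computational_Algebra.Polynomial"
begin

text \<open>Coefficients b_{m,j}, for 0 <= j <= k-1 (values for j >= k are irrelevant).\<close>
primrec bcoef :: "nat \<Rightarrow> (nat \<Rightarrow> real) \<Rightarrow> nat \<Rightarrow> nat \<Rightarrow> real" where
  "bcoef k a 0 j = a j"
| "bcoef k a (Suc m) j =
     (if j < k - 1 then a j * bcoef k a m 0 + bcoef k a m (j + 1)
      else a (k - 1) * bcoef k a m 0)"

definition pm :: "nat \<Rightarrow> (nat \<Rightarrow> real) \<Rightarrow> nat \<Rightarrow> real poly" where
  "pm k a m = monom 1 (k + m) - (\<Sum>j<k. monom (bcoef k a m j) (k - j - 1))"

definition l1_norm_poly :: "real poly \<Rightarrow> real" where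
  "l1_norm_poly p = (\<Sum>i\<le>degree p. \<bar>coeff p i\<bar>)"

definition is_solution :: "nat \<Rightarrow> (nat \<Rightarrow> real) \<Rightarrow> (nat \<Rightarrow> real) \<Rightarrow> bool" where
  "is_solution k a x \<longleftrightarrow> (\<forall>n. x (n + k) = (\<Sum>j<k. a j * x (n + k - 1 - j)))"

end

theory Submission
  imports Defs
begin

function sol :: "nat \<Rightarrow> (nat \<Rightarrow> real) \<Rightarrow> (nat \<Rightarrow> real) \<Rightarrow> nat \<Rightarrow> real" where
  "sol k a ini n = (if n < k then ini n else (\<Sum>j<k. a j * sol k a ini (n - 1 - j)))"
  by auto
termination by (relation "Wellfounded.measure (\<lambda>(k,a,ini,n). n)") auto

declare sol.simps[simp del]

lemma sol_is_solution: "is_solution k a (sol k a ini)"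
  unfolding is_solution_def
proof
  fix n
  show "sol k a ini (n + k) = (\<Sum>j<k. a j * sol k a ini (n + k - 1 - j))"
    by (subst sol.simps) simp
qed

lemma sol_init: "n < k \<Longrightarrow> sol k a ini n = ini n"
  by (subst sol.simps) simp

lemma sol_step:
  assumes "is_solution k a x" "k \<ge> 1" "N \<ge> k - 1"
  shows "x (Suc N) = (\<Sum>j<k. a j * x (N - j))"
proof -
  have "x ((N + 1 - k) + k) = (\<Sum>j<k. a j * x ((N + 1 - k) + k - 1 - j))"
    using assms(1) unfolding is_solution_def by blast
  moreover have "(N + 1 - k) + k = Suc N" using assms by simp
  moreover have "\<And>j. (N + 1 - k) + k - 1 - j = N - j" using assms by simp
  ultimately show ?thesis by simp
qed

lemma bcoef_rep:
  assumes "is_solution k a x" "k \<ge> 1"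
  shows "n \<ge> k - 1 \<Longrightarrow> x (n + m + 1) = (\<Sum>j<k. bcoef k a m j * x (n - j))"
proof (induction m arbitrary: n)
  case 0
  then show ?case using sol_step[OF assms, of n] by simp
next
  case (Suc m)
  obtain k' where k': "k = Suc k'" using assms(2) by (cases k) auto
  have IH: "x (Suc n + m + 1) = (\<Sum>j<k. bcoef k a m j * x (Suc n - j))"
    using Suc.IH[of "Suc n"] Suc.prems by simp
  have xs: "x (Suc n) = (\<Sum>j<k. a j * x (n - j))" using sol_step[OF assms Suc.prems] .
  have "(\<Sum>j<k. bcoef k a m j * x (Suc n - j))
       = bcoef k a m 0 * x (Suc n) + (\<Sum>j<k'. bcoef k a m (Suc j) * x (n - j))"
    unfolding k' sum.lessThan_Suc_shift by simp
  also have "\<dots> = (\<Sum>j<k. bcoef k a m 0 * a j * x (n - j)) + (\<Sum>j<k'. bcoef k a m (Suc j) * x (n - j))"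
    unfolding xs sum_distrib_left by (simp add: mult.assoc)
  also have "\<dots> = (\<Sum>j<k'. (a j * bcoef k a m 0 + bcoef k a m (j+1)) * x (n - j))
                 + a k' * bcoef k a m 0 * x (n - k')"
    unfolding k' sum.lessThan_Suc by (simp add: algebra_simps sum.distrib)
  also have "\<dots> = (\<Sum>j<k. bcoef k a (Suc m) j * x (n - j))"
    unfolding k' sum.lessThan_Suc by (simp add: k' mult.commute)
  finally show ?case using IH by simp
qed

lemma l1_pm:
  assumes "k \<ge> 1"
  shows "l1_norm_poly (pm k a m) = 1 + (\<Sum>j<k. \<bar>bcoef k a m j\<bar>)"
proof -
  let ?p = "pm k a m"
  have c: "coeff ?p i = (if i = k + m then 1 else 0) - (\<Sum>j<k. if k - j - 1 = i then bcoef k a m j else 0)" for i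
    unfolding pm_def by (simp add: coeff_sum coeff_monom)
  have c1: "coeff ?p i = 0" if "i > k + m" for i
    unfolding c using that by (auto intro!: sum.neutral)
  have c2: "coeff ?p (k+m) = 1"
    unfolding c using assms by (auto intro!: sum.neutral)
  have c3: "coeff ?p i = 0" if "k \<le> i" "i < k + m" for i
    unfolding c using that by (auto intro!: sum.neutral)
  have c4: "coeff ?p i = - bcoef k a m (k - 1 - i)" if "i < k" for i
  proof -
    have "(\<Sum>j<k. if k - j - 1 = i then bcoef k a m j else 0) = (\<Sum>j\<in>{k - 1 - i}. bcoef k a m j)"
      using that by (intro sum.mono_neutral_cong_right) auto
    then show ?thesis unfolding c using that by simp
  qed
  have deg: "degree ?p = k + m"
    by (rule antisym) (auto intro!: degree_le le_degree simp: c1 c2)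
  have split: "{..k+m} = {..<k} \<union> ({k..<k+m} \<union> {k+m})" by auto
  have "l1_norm_poly ?p = (\<Sum>i\<in>{..<k} \<union> ({k..<k+m} \<union> {k+m}). \<bar>coeff ?p i\<bar>)"
    unfolding l1_norm_poly_def deg split ..
  also have "\<dots> = (\<Sum>i<k. \<bar>coeff ?p i\<bar>) + ((\<Sum>i\<in>{k..<k+m}. \<bar>coeff ?p i\<bar>) + 1)"
    by (subst sum.union_disjoint; auto simp: c2)+
  also have "(\<Sum>i\<in>{k..<k+m}. \<bar>coeff ?p i\<bar>) = 0"
    by (auto intro!: sum.neutral simp: c3)
  also have "(\<Sum>i<k. \<bar>coeff ?p i\<bar>) = (\<Sum>i<k. \<bar>bcoef k a m (k - Suc i)\<bar>)"
    by (intro sum.cong) (auto simp: c4)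
  also have "\<dots> = (\<Sum>j<k. \<bar>bcoef k a m j\<bar>)"
    by (rule sum.nat_diff_reindex)
  finally show ?thesis by simp
qed

theorem mainTheorem7:
  fixes k :: nat and a :: "nat \<Rightarrow> real"
  assumes "k \<ge> 2" and "a 0 \<noteq> 0"
  shows "(\<forall>x. is_solution k a x \<longrightarrow> x \<longlonglongrightarrow> 0)
         \<longleftrightarrow> (\<exists>m::nat. l1_norm_poly (pm k a m) < 2)"
proof -
  have k1: "k \<ge> 1" using assms by simp
  show ?thesis
  proof
    assume H: "\<forall>x. is_solution k a x \<longrightarrow> x \<longlonglongrightarrow> 0"
    have bj: "(\<lambda>m. bcoef k a m j) \<longlonglongrightarrow> 0" if j: "j < k" for j
    proof -
      define e where "e = sol k a (\<lambda>i. if i = k - 1 - j then 1 else 0)"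
      have es: "is_solution k a e" unfolding e_def by (rule sol_is_solution)
      have "e (k - 1 + m + 1) = bcoef k a m j" for m
      proof -
        have "e (k - 1 + m + 1) = (\<Sum>i<k. bcoef k a m i * e (k - 1 - i))"
          using bcoef_rep[OF es k1] by simp
        also have "\<dots> = (\<Sum>i\<in>{j}. bcoef k a m i)"
          using j by (intro sum.mono_neutral_cong_right) (auto simp: e_def sol_init)
        finally show ?thesis by simp
      qed
      moreover have "(\<lambda>m. e (m + k)) \<longlonglongrightarrow> 0"
        using LIMSEQ_ignore_initial_segment[OF H[rule_format, OF es], of k] .
      ultimately show ?thesis using k1 by (simp add: add.commute)
    qed
    have "(\<lambda>m. \<Sum>j<k. \<bar>bcoef k a m j\<bar>) \<longlonglongrightarrow> (\<Sum>j<k. 0)"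
      by (intro tendsto_sum tendsto_rabs_zero bj) simp
    then have "\<forall>\<^sub>F m in sequentially. (\<Sum>j<k. \<bar>bcoef k a m j\<bar>) < 1"
      by (intro order_tendstoD(2)) auto
    then obtain m where "(\<Sum>j<k. \<bar>bcoef k a m j\<bar>) < 1"
      using eventually_sequentially by auto
    then show "\<exists>m. l1_norm_poly (pm k a m) < 2" using l1_pm[OF k1] by auto
  next
    assume "\<exists>m. l1_norm_poly (pm k a m) < 2"
    then obtain m where "l1_norm_poly (pm k a m) < 2" by blast
    then have c1: "(\<Sum>j<k. \<bar>bcoef k a m j\<bar>) < 1" using l1_pm[OF k1] by auto
    define c where "c = (\<Sum>j<k. \<bar>bcoef k a m j\<bar>)"
    have c0: "c \<ge> 0" unfolding c_def by (auto intro: sum_nonneg)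
    have cl1: "c < 1" using c1 c_def by simp
    show "\<forall>x. is_solution k a x \<longrightarrow> x \<longlonglongrightarrow> 0"
    proof (intro allI impI)
      fix x assume xs: "is_solution k a x"
      define L where "L = m + k"
      have L0: "L > 0" using k1 L_def by simp
      define D where "D = (\<Sum>i<L. \<bar>x i\<bar>)"
      have D0: "D \<ge> 0" unfolding D_def by (auto intro: sum_nonneg)
      have bound: "\<bar>x s\<bar> \<le> c ^ (s div L) * D" for s
      proof (induction s rule: less_induct)
        case (less s)
        show ?case
        proof (cases "s < L")
          case True
          then have "\<bar>x s\<bar> \<le> D" unfolding D_def
            by (intro member_le_sum) auto
          then show ?thesis using True by simp
        next
          case False
          define n where "n = s - m - 1"
          have nk: "n \<ge> k - 1" using False L_def n_def by simp
          have sn: "s = n + m + 1" using False L_def n_def k1 by simp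
          have sdiv: "s div L = (s - L) div L + 1"
          proof -
            have "s = (s - L) + L" using False by simp
            then have "s div L = ((s - L) + L) div L" by simp
            also have "\<dots> = (s - L) div L + 1" using L0 by simp
            finally show ?thesis .
          qed
          have each: "\<bar>x (n - j)\<bar> \<le> c ^ (s div L - 1) * D" if j: "j < k" for j
          proof -
            have lt: "n - j < s" using sn by simp
            have ge: "n - j \<ge> s - L" using sn L_def j by simp
            have "(s - L) div L \<le> (n - j) div L" using ge by (rule div_le_mono)
            then have "c ^ ((n - j) div L) \<le> c ^ (s div L - 1)"
              using sdiv c0 cl1 by (intro power_decreasing) auto
            then have "c ^ ((n - j) div L) * D \<le> c ^ (s div L - 1) * D"
              using D0 by (intro mult_right_mono) auto
            then show ?thesis using less.IH[OF lt] by linarith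
          qed
          have "\<bar>x s\<bar> = \<bar>\<Sum>j<k. bcoef k a m j * x (n - j)\<bar>"
            using bcoef_rep[OF xs k1 nk, of m] sn by simp
          also have "\<dots> \<le> (\<Sum>j<k. \<bar>bcoef k a m j * x (n - j)\<bar>)" by (rule sum_abs)
          also have "\<dots> \<le> (\<Sum>j<k. \<bar>bcoef k a m j\<bar> * (c ^ (s div L - 1) * D))"
            unfolding abs_mult by (intro sum_mono mult_left_mono each) auto
          also have "\<dots> = c * c ^ (s div L - 1) * D"
            unfolding c_def by (simp add: sum_distrib_right mult.assoc)
          also have "\<dots> = c ^ (s div L) * D"
            using sdiv by (simp add: power_Suc[symmetric] del: power_Suc)
          finally show ?thesis .
        qed
      qed
      have "(\<lambda>s. c ^ (s div L)) \<longlonglongrightarrow> 0"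
        using filterlim_compose[OF LIMSEQ_power_zero[of c] filterlim_at_top_div_const_nat[OF L0]]
          c0 cl1 by simp
      then have "(\<lambda>s. c ^ (s div L) * D) \<longlonglongrightarrow> 0"
        by (rule tendsto_mult_left_zero)
      then show "x \<longlonglongrightarrow> 0"
        by (rule Lim_null_comparison[rotated]) (simp add: bound)
    qed
  qed
qed

end
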